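(* Fix a treatment value $t$ and let $(\bm{X}, Y(t))$ be random variables, where $Y(t)$ is real-valued with conditional density $f_{Y(t)}(z\mid \bm{x})$ given $\bm{X}=\bm{x}$, and $\bm{X}$ has distribution $\mathbb{P}_{\bm{X}}$. Let $K$ be a probability density on $\mathbb{R}$, let $h>0$, and define $\delta_h(u)=\frac{1}{h}K(u/h)$ and $$g_h(z\mid \bm{x}) = \mathbb{E}[\delta_h(z-Y(t))\mid \bm{X}=\bm{x}] = \int \frac{1}{h}K\Big(\frac{z-k}{h}\Big) f_{Y(t)}(k\mid \bm{x})\,dk.$$ Let $\widehat{g}_h(z\mid \bm{x})$ be an estimator of $g_h(z\mid\bm{x})$ constructed from $n$ i.i.d. samples (obtained by regressing $\delta_h(z-Y(t))$ on $\bm{X}$), and set $$Q_n(z) = \int \big|\widehat{g}_h(z\mid \bm{x}) - g_h(z\mid \bm{x})\big|^2\, d\mathbb{P}_{\bm{X}}(\bm{x}).$$ Assume: (A1) for every fixed $h>0$ and every fixed $z$, $Q_n(z)=o_p(1)$ as $n\to\infty$; (A2) $Q_n(z)$ is differentiable in $z$ and $\sup_z |\partial Q_n(z)/\partial z| = O_p(1)$; (A3) $\int u K(u)\,du = 0$ and $\int u^2 K(u)\,du<\infty$; (A4) for every $\bm{x}$, $z\mapsto f_{Y(t)}(z\mid\bm{x})$ is twice continuously differentiable, and $\int\int |f''_{Y(t)}(z\mid\bm{x})|^2\,d\mathbb{P}_{\bm{X}}(\bm{x})\,dz<\infty$, where $''$ denotes the second derivative in $z$. Then for any real numbers $a<b$,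 $$\int_a^b\int \big|\widehat{g}_h(z\mid \bm{x}) - f_{Y(t)}(z\mid \bm{x})\big|^2\, d\mathbb{P}_{\bm{X}}(\bm{x})\,dz \le o_p(1) + C h^4,$$ where $C$ is a constant that does not depend on $n$ or $h$.
   Context: $o_p(1)$ denotes a sequence of random variables converging to $0$ in probability as $n\to\infty$; $O_p(1)$ denotes a sequence of random variables that is bounded in probability (tight). *)

theory Defs
  imports "HOL-Probability.Probability"
begin

definition gh :: "(real \<Rightarrow> real) \<Rightarrow> ('x \<Rightarrow> real \<Rightarrow> real) \<Rightarrow> real \<Rightarrow> real \<Rightarrow> 'x \<Rightarrow> real" where
  "gh K f h z x = (\<integral>k. (1 / h) * K ((z - k) / h) * f x k \<partial>lborel)"

text \<open>Q_n(z) = integral over P_X of |ghat_h(z|x) - g_h(z|x)|^2.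
  ghat n h w z x : the estimator built from n samples, at bandwidth h, sample outcome w.\<close>
definition Qn :: "'x measure \<Rightarrow> (real \<Rightarrow> real) \<Rightarrow> ('x \<Rightarrow> real \<Rightarrow> real)
    \<Rightarrow> (nat \<Rightarrow> real \<Rightarrow> 'w \<Rightarrow> real \<Rightarrow> 'x \<Rightarrow> real) \<Rightarrow> nat \<Rightarrow> real \<Rightarrow> 'w \<Rightarrow> real \<Rightarrow> real" where
  "Qn PX K f ghat n h w z = (\<integral>x. (ghat n h w z x - gh K f h z x)^2 \<partial>PX)"

definition op_one :: "'w measure \<Rightarrow> (nat \<Rightarrow> 'w \<Rightarrow> real) \<Rightarrow> bool" where
  "op_one M Z \<longleftrightarrow> (\<forall>n. Z n \<in> borel_measurable M) \<and>
     (\<forall>e>0. (\<lambda>n. measure M {w \<in> space M. \<bar>Z n w\<bar> > e}) \<longlonglongrightarrow> 0)"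

text \<open>Z_n = O_p(1) (bounded in probability / tight), for possibly infinite
  nonnegative random quantities such as a supremum.\<close>
definition Op_one :: "'w measure \<Rightarrow> (nat \<Rightarrow> 'w \<Rightarrow> ennreal) \<Rightarrow> bool" where
  "Op_one M Z \<longleftrightarrow> (\<forall>n. Z n \<in> borel_measurable M) \<and>
     (\<forall>e>0. \<exists>c::real. eventually (\<lambda>n. measure M {w \<in> space M. Z n w > ennreal c} < e) sequentially)"

end

theory Submission
  imports Defs
begin


lemma taylor_bd:
  fixes F F' q :: "real \<Rightarrow> real"
  assumes d1: "\<And>y. DERIV F y :> F' y" and d2: "\<And>y. DERIV F' y :> q y"
    and cq: "continuous_on UNIV q"
  shows "ennreal \<bar>F (z + d) - F z - d * F' z\<bar> \<le>
     ennreal \<bar>d\<bar> * (\<integral>\<^sup>+t. ennreal (indicator {z-\<bar>d\<bar>..z+\<bar>d\<bar>} t * \<bar>q t\<bar>) \<partial>lborel)"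
proof -
  have der: "DERIV (\<lambda>y. F y - y * F' z) y :> F' y - F' z" for y
    using DERIV_diff[OF d1[of y] DERIV_cmult_right[OF DERIV_ident, of "F' z"]] by simp
  have "\<exists>\<xi>. \<bar>\<xi> - z\<bar> \<le> \<bar>d\<bar> \<and> F (z + d) - F z - d * F' z = d * (F' \<xi> - F' z)"
  proof (cases "d > 0")
    case True
    from MVT2[of z "z+d" "\<lambda>y. F y - y * F' z" "\<lambda>y. F' y - F' z"] True der
    obtain \<xi> where "z < \<xi>" "\<xi> < z + d" "F (z + d) - (z + d) * F' z - (F z - z * F' z) = (z + d - z) * (F' \<xi> - F' z)"
      by auto
    then show ?thesis by (intro exI[of _ \<xi>]) (auto simp: algebra_simps)
  next
    case False
    show ?thesis
    proof (cases "d = 0")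
      case True then show ?thesis by (intro exI[of _ z]) auto
    next
      case False2: False
      with False have "d < 0" by auto
      from MVT2[of "z+d" z "\<lambda>y. F y - y * F' z" "\<lambda>y. F' y - F' z"] \<open>d<0\<close> der
      obtain \<xi> where "z + d < \<xi>" "\<xi> < z" "F z - z * F' z - (F (z + d) - (z + d) * F' z) = (z - (z + d)) * (F' \<xi> - F' z)"
        by auto
      then show ?thesis by (intro exI[of _ \<xi>]) (auto simp: algebra_simps)
    qed
  qed
  then obtain \<xi> where xi: "\<bar>\<xi> - z\<bar> \<le> \<bar>d\<bar>" and eq: "F (z + d) - F z - d * F' z = d * (F' \<xi> - F' z)"
    by blast
  define lo where "lo = min \<xi> z"
  define hi where "hi = max \<xi> z"
  have lohi: "lo \<le> hi" by (simp add: lo_def hi_def)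
  have ftc: "integral\<^sup>L lborel (\<lambda>x. indicator {lo .. hi} x *\<^sub>R q x) = F' hi - F' lo"
    by (rule integral_FTC_atLeastAtMost[OF lohi])
       (auto intro: continuous_on_subset[OF cq] simp: has_real_derivative_iff_has_vector_derivative[symmetric]
             intro!: DERIV_subset[OF d2])
  have int: "integrable lborel (\<lambda>x. indicator {lo .. hi} x *\<^sub>R q x)"
    using borel_integrable_atLeastAtMost'[OF continuous_on_subset[OF cq]] unfolding set_integrable_def by blast
  have "\<bar>F' \<xi> - F' z\<bar> = \<bar>F' hi - F' lo\<bar>"
    unfolding lo_def hi_def by (auto simp: min_def max_def)
  also have "\<dots> = norm (integral\<^sup>L lborel (\<lambda>x. indicator {lo .. hi} x *\<^sub>R q x))"
    unfolding ftc by simp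
  also have "ennreal \<dots> \<le> (\<integral>\<^sup>+x. norm (indicator {lo .. hi} x *\<^sub>R q x) \<partial>lborel)"
    by (rule integral_norm_bound_ennreal[OF int])
  also have "\<dots> \<le> (\<integral>\<^sup>+t. ennreal (indicator {z-\<bar>d\<bar>..z+\<bar>d\<bar>} t * \<bar>q t\<bar>) \<partial>lborel)"
    using xi by (intro nn_integral_mono) (auto simp: indicator_def lo_def hi_def)
  finally have b: "ennreal \<bar>F' \<xi> - F' z\<bar> \<le> (\<integral>\<^sup>+t. ennreal (indicator {z-\<bar>d\<bar>..z+\<bar>d\<bar>} t * \<bar>q t\<bar>) \<partial>lborel)" .
  show ?thesis unfolding eq abs_mult ennreal_mult'[OF abs_ge_zero]
    by (intro mult_left_mono b) auto
qed

lemma bias_pt: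
  fixes F F' q K :: "real \<Rightarrow> real"
  assumes d1: "\<And>y. DERIV F y :> F' y" and d2: "\<And>y. DERIV F' y :> q y"
    and cq: "continuous_on UNIV q"
    and K_meas: "K \<in> borel_measurable borel" and K_nonneg: "\<And>u. K u \<ge> 0"
    and K_int: "integrable lborel K" and K_one: "(\<integral>u. K u \<partial>lborel) = 1"
    and uK_int: "integrable lborel (\<lambda>u. u * K u)" and uK0: "(\<integral>u. u * K u \<partial>lborel) = 0"
    and h: "h > 0"
  shows "ennreal \<bar>(\<integral>k. (1 / h) * K ((z - k) / h) * F k \<partial>lborel) - F z\<bar> \<le>
     (\<integral>\<^sup>+u. \<integral>\<^sup>+t. ennreal ((if \<bar>t - z\<bar> \<le> \<bar>h*u\<bar> then K u * \<bar>h*u\<bar> else 0) * \<bar>q t\<bar>) \<partial>lborel \<partial>lborel)"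
    (is "_ \<le> ?G")
proof -
  define R where "R u = F (z + (-h)*u) - F z - ((-h)*u) * F' z" for u
  have q_meas[measurable]: "q \<in> borel_measurable borel"
    using cq by (rule borel_measurable_continuous_onI)
  have Fc: "continuous_on UNIV F"
    using d1 by (meson DERIV_isCont continuous_at_imp_continuous_on)
  have R_meas[measurable]: "R \<in> borel_measurable borel"
    unfolding R_def by (intro borel_measurable_continuous_onI continuous_intros continuous_on_compose2[OF Fc]) auto
  have Rb: "ennreal (K u * \<bar>R u\<bar>) \<le> (\<integral>\<^sup>+t. ennreal ((if \<bar>t - z\<bar> \<le> \<bar>h*u\<bar> then K u * \<bar>h*u\<bar> else 0) * \<bar>q t\<bar>) \<partial>lborel)" for u
  proof -
    have "ennreal (K u * \<bar>R u\<bar>) = ennreal (K u) * ennreal \<bar>R u\<bar>"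
      using K_nonneg by (simp add: ennreal_mult)
    also have "\<dots> \<le> ennreal (K u) * (ennreal \<bar>(-h)*u\<bar> * (\<integral>\<^sup>+t. ennreal (indicator {z-\<bar>(-h)*u\<bar>..z+\<bar>(-h)*u\<bar>} t * \<bar>q t\<bar>) \<partial>lborel))"
      unfolding R_def by (intro mult_left_mono taylor_bd[OF d1 d2 cq]) auto
    also have "\<dots> = (\<integral>\<^sup>+t. ennreal (K u) * ennreal \<bar>(-h)*u\<bar> * ennreal (indicator {z-\<bar>(-h)*u\<bar>..z+\<bar>(-h)*u\<bar>} t * \<bar>q t\<bar>) \<partial>lborel)"
      by (subst nn_integral_cmult) (auto simp: mult.assoc)
    also have "\<dots> = (\<integral>\<^sup>+t. ennreal ((if \<bar>t - z\<bar> \<le> \<bar>h*u\<bar> then K u * \<bar>h*u\<bar> else 0) * \<bar>q t\<bar>) \<partial>lborel)"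
      using K_nonneg by (intro nn_integral_cong) (auto simp: indicator_def ennreal_mult[symmetric] abs_le_iff abs_mult)
    finally show ?thesis .
  qed
  show ?thesis
  proof (cases "?G = \<infinity>")
    case True then show ?thesis by simp
  next
    case False
    have KR_le: "(\<integral>\<^sup>+u. norm (K u * R u) \<partial>lborel) \<le> ?G"
      proof (intro nn_integral_mono)
      fix u show "ennreal (norm (K u * R u)) \<le> (\<integral>\<^sup>+t. ennreal ((if \<bar>t - z\<bar> \<le> \<bar>h*u\<bar> then K u * \<bar>h*u\<bar> else 0) * \<bar>q t\<bar>) \<partial>lborel)"
        using Rb[of u] K_nonneg[of u] by (simp add: abs_mult)
    qed
    have KRm: "(\<lambda>u. K u * R u) \<in> borel_measurable lborel" using K_meas by measurable
    have KR_int: "integrable lborel (\<lambda>u. K u * R u)"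
      by (rule integrableI_bounded[OF KRm]) (use KR_le False in \<open>auto simp: top.not_eq_extremum intro: le_less_trans\<close>)
    have expand: "K u * F (z + (-h)*u) = F z * K u + ((-h) * F' z) * (u * K u) + K u * R u" for u
      unfolding R_def by (simp add: algebra_simps)
    have int2: "integrable lborel (\<lambda>u. K u * F (z + (-h)*u))"
      unfolding expand using K_int uK_int KR_int by auto
    have int_eq: "(\<integral>u. K u * F (z + (-h)*u) \<partial>lborel) = F z + (\<integral>u. K u * R u \<partial>lborel)"
      unfolding expand using K_int uK_int KR_int K_one uK0 by simp
    have cv: "(\<integral>k. (1 / h) * K ((z - k) / h) * F k \<partial>lborel) = \<bar>-h\<bar> *\<^sub>R (\<integral>u. (1 / h) * K ((z - (z + (-h)*u)) / h) * F (z + (-h)*u) \<partial>lborel)"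
      by (rule lborel_integral_real_affine) (use h in auto)
    also have "\<dots> = h * (\<integral>u. (1 / h) * (K u * F (z + (-h)*u)) \<partial>lborel)"
      using h by (simp add: mult.assoc)
    also have "\<dots> = (\<integral>u. K u * F (z + (-h)*u) \<partial>lborel)"
      using h by simp
    finally have "(\<integral>k. (1 / h) * K ((z - k) / h) * F k \<partial>lborel) - F z = (\<integral>u. K u * R u \<partial>lborel)"
      using int_eq by simp
    then have "ennreal \<bar>(\<integral>k. (1 / h) * K ((z - k) / h) * F k \<partial>lborel) - F z\<bar> = ennreal (norm (\<integral>u. K u * R u \<partial>lborel))"
      by simp
    also have "\<dots> \<le> (\<integral>\<^sup>+u. norm (K u * R u) \<partial>lborel)"
      by (rule integral_norm_bound_ennreal[OF KR_int])
    finally show ?thesis using KR_le by (rule order_trans)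
  qed
qed

lemma weight_total:
  fixes K :: "real \<Rightarrow> real"
  assumes K_meas[measurable]: "K \<in> borel_measurable borel" and K_nonneg: "\<And>u. K u \<ge> 0"
    and u2K: "integrable lborel (\<lambda>u. u^2 * K u)" and h: "h > 0"
  shows "(\<integral>\<^sup>+u. \<integral>\<^sup>+t. ennreal (if \<bar>t - z\<bar> \<le> \<bar>h*u\<bar> then K u * \<bar>h*u\<bar> else 0) \<partial>lborel \<partial>lborel)
          = ennreal (2 * h^2 * (\<integral>u. u^2 * K u \<partial>lborel))"
proof -
  have "(\<integral>\<^sup>+t. ennreal (if \<bar>t - z\<bar> \<le> \<bar>h*u\<bar> then K u * \<bar>h*u\<bar> else 0) \<partial>lborel)
     = ennreal (2 * h^2 * (u^2 * K u))" for u
  proof -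
    have "(\<integral>\<^sup>+t. ennreal (if \<bar>t - z\<bar> \<le> \<bar>h*u\<bar> then K u * \<bar>h*u\<bar> else 0) \<partial>lborel)
        = (\<integral>\<^sup>+t. ennreal (K u * \<bar>h*u\<bar>) * indicator {z - \<bar>h*u\<bar> .. z + \<bar>h*u\<bar>} t \<partial>lborel)"
      by (intro nn_integral_cong) (auto simp: indicator_def abs_le_iff)
    also have "\<dots> = ennreal (K u * \<bar>h*u\<bar>) * ennreal (2 * \<bar>h*u\<bar>)"
      by (subst nn_integral_cmult_indicator) auto
    also have "\<dots> = ennreal (2 * h^2 * (u^2 * K u))"
      using K_nonneg[of u] h by (subst ennreal_mult[symmetric]) (auto simp: abs_mult power2_eq_square)
    finally show ?thesis .
  qed
  then have "(\<integral>\<^sup>+u. \<integral>\<^sup>+t. ennreal (if \<bar>t - z\<bar> \<le> \<bar>h*u\<bar> then K u * \<bar>h*u\<bar> else 0) \<partial>lborel \<partial>lborel)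
     = (\<integral>\<^sup>+u. ennreal (2 * h^2) * ennreal (u^2 * K u) \<partial>lborel)"
    using K_nonneg h by (intro nn_integral_cong) (simp add: ennreal_mult)
  also have "\<dots> = ennreal (2 * h^2) * (\<integral>\<^sup>+u. ennreal (u^2 * K u) \<partial>lborel)"
    by (rule nn_integral_cmult) measurable
  also have "(\<integral>\<^sup>+u. ennreal (u^2 * K u) \<partial>lborel) = ennreal (\<integral>u. u^2 * K u \<partial>lborel)"
    using K_nonneg by (intro nn_integral_eq_integral u2K) auto
  finally show ?thesis
    using K_nonneg h by (simp add: ennreal_mult integral_nonneg_AE)
qed

lemma cs_step:
  fixes K q :: "real \<Rightarrow> real"
  assumes K_meas[measurable]: "K \<in> borel_measurable borel" and K_nonneg: "\<And>u. K u \<ge> 0"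
    and q_meas[measurable]: "q \<in> borel_measurable borel"
  shows "(\<integral>\<^sup>+u. \<integral>\<^sup>+t. ennreal ((if \<bar>t - z\<bar> \<le> \<bar>h*u\<bar> then K u * \<bar>h*u\<bar> else 0) * \<bar>q t\<bar>) \<partial>lborel \<partial>lborel)^2
    \<le> (\<integral>\<^sup>+u. \<integral>\<^sup>+t. ennreal (if \<bar>t - z\<bar> \<le> \<bar>h*u\<bar> then K u * \<bar>h*u\<bar> else 0) \<partial>lborel \<partial>lborel) *
      (\<integral>\<^sup>+u. \<integral>\<^sup>+t. ennreal ((if \<bar>t - z\<bar> \<le> \<bar>h*u\<bar> then K u * \<bar>h*u\<bar> else 0) * (q t)^2) \<partial>lborel \<partial>lborel)"
proof -
  define w where "w = (\<lambda>(u::real, t::real). if \<bar>t - z\<bar> \<le> \<bar>h * u\<bar> then K u * \<bar>h * u\<bar> else 0)"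
  have w_meas[measurable]: "w \<in> borel_measurable (lborel \<Otimes>\<^sub>M lborel)"
    unfolding w_def by measurable
  have w0: "w p \<ge> 0" for p using K_nonneg by (auto simp: w_def split: prod.splits)
  have e1: "(\<integral>\<^sup>+u. \<integral>\<^sup>+t. ennreal ((if \<bar>t - z\<bar> \<le> \<bar>h*u\<bar> then K u * \<bar>h*u\<bar> else 0) * \<bar>q t\<bar>) \<partial>lborel \<partial>lborel)
     = (\<integral>\<^sup>+p. ennreal (sqrt (w p)) * ennreal (sqrt (w p) * \<bar>q (snd p)\<bar>) \<partial>(lborel \<Otimes>\<^sub>M lborel))"
  proof -
    have "(\<integral>\<^sup>+u. \<integral>\<^sup>+t. ennreal ((if \<bar>t - z\<bar> \<le> \<bar>h*u\<bar> then K u * \<bar>h*u\<bar> else 0) * \<bar>q t\<bar>) \<partial>lborel \<partial>lborel)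
      = (\<integral>\<^sup>+u. \<integral>\<^sup>+t. ennreal (w (u,t) * \<bar>q (snd (u,t))\<bar>) \<partial>lborel \<partial>lborel)"
      by (simp add: w_def)
    also have "\<dots> = (\<integral>\<^sup>+p. ennreal (w p * \<bar>q (snd p)\<bar>) \<partial>(lborel \<Otimes>\<^sub>M lborel))"
      by (rule lborel.nn_integral_fst) measurable
    also have "\<dots> = (\<integral>\<^sup>+p. ennreal (sqrt (w p)) * ennreal (sqrt (w p) * \<bar>q (snd p)\<bar>) \<partial>(lborel \<Otimes>\<^sub>M lborel))"
      using w0 by (intro nn_integral_cong) (simp add: ennreal_mult[symmetric] mult.assoc[symmetric])
    finally show ?thesis .
  qed
  have e2: "(\<integral>\<^sup>+u. \<integral>\<^sup>+t. ennreal (if \<bar>t - z\<bar> \<le> \<bar>h*u\<bar> then K u * \<bar>h*u\<bar> else 0) \<partial>lborel \<partial>lborel)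
     = (\<integral>\<^sup>+p. (ennreal (sqrt (w p)))^2 \<partial>(lborel \<Otimes>\<^sub>M lborel))"
  proof -
    have "(\<integral>\<^sup>+u. \<integral>\<^sup>+t. ennreal (if \<bar>t - z\<bar> \<le> \<bar>h*u\<bar> then K u * \<bar>h*u\<bar> else 0) \<partial>lborel \<partial>lborel)
      = (\<integral>\<^sup>+u. \<integral>\<^sup>+t. ennreal (w (u,t)) \<partial>lborel \<partial>lborel)"
      by (simp add: w_def)
    also have "\<dots> = (\<integral>\<^sup>+p. ennreal (w p) \<partial>(lborel \<Otimes>\<^sub>M lborel))"
      by (rule lborel.nn_integral_fst) measurable
    also have "\<dots> = (\<integral>\<^sup>+p. (ennreal (sqrt (w p)))^2 \<partial>(lborel \<Otimes>\<^sub>M lborel))"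
      using w0 by (intro nn_integral_cong) (metis ennreal_power real_sqrt_ge_zero real_sqrt_pow2)
    finally show ?thesis .
  qed
  have e3: "(\<integral>\<^sup>+u. \<integral>\<^sup>+t. ennreal ((if \<bar>t - z\<bar> \<le> \<bar>h*u\<bar> then K u * \<bar>h*u\<bar> else 0) * (q t)^2) \<partial>lborel \<partial>lborel)
     = (\<integral>\<^sup>+p. (ennreal (sqrt (w p) * \<bar>q (snd p)\<bar>))^2 \<partial>(lborel \<Otimes>\<^sub>M lborel))"
  proof -
    have "(\<integral>\<^sup>+u. \<integral>\<^sup>+t. ennreal ((if \<bar>t - z\<bar> \<le> \<bar>h*u\<bar> then K u * \<bar>h*u\<bar> else 0) * (q t)^2) \<partial>lborel \<partial>lborel)
      = (\<integral>\<^sup>+u. \<integral>\<^sup>+t. ennreal (w (u,t) * (q (snd (u,t)))^2) \<partial>lborel \<partial>lborel)"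
      by (simp add: w_def)
    also have "\<dots> = (\<integral>\<^sup>+p. ennreal (w p * (q (snd p))^2) \<partial>(lborel \<Otimes>\<^sub>M lborel))"
      by (rule lborel.nn_integral_fst) measurable
    also have "\<dots> = (\<integral>\<^sup>+p. (ennreal (sqrt (w p) * \<bar>q (snd p)\<bar>))^2 \<partial>(lborel \<Otimes>\<^sub>M lborel))"
      proof (intro nn_integral_cong)
      fix p :: "real \<times> real"
      have eq: "(sqrt (w p) * \<bar>q (snd p)\<bar>)^2 = w p * (q (snd p))^2"
        using w0[of p] by (simp add: power_mult_distrib)
      have nn: "0 \<le> sqrt (w p) * \<bar>q (snd p)\<bar>" using w0[of p] by simp
      then show "ennreal (w p * (q (snd p))^2) = (ennreal (sqrt (w p) * \<bar>q (snd p)\<bar>))^2"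
        by (simp only: ennreal_power[OF nn] eq)
    qed
    finally show ?thesis .
  qed
  show ?thesis unfolding e1 e2 e3
    by (rule Cauchy_Schwarz_nn_integral) measurable
qed

lemma int_z:
  fixes K Q :: "real \<Rightarrow> real"
  assumes K_meas[measurable]: "K \<in> borel_measurable borel" and K_nonneg: "\<And>u. K u \<ge> 0"
    and u2K: "integrable lborel (\<lambda>u. u^2 * K u)" and h: "h > 0"
    and Q_meas[measurable]: "Q \<in> borel_measurable borel" and Q_nonneg: "\<And>t. Q t \<ge> 0"
  shows "(\<integral>\<^sup>+z. \<integral>\<^sup>+u. \<integral>\<^sup>+t. ennreal ((if \<bar>t - z\<bar> \<le> \<bar>h*u\<bar> then K u * \<bar>h*u\<bar> else 0) * Q t) \<partial>lborel \<partial>lborel \<partial>lborel)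
     = ennreal (2 * h^2 * (\<integral>u. u^2 * K u \<partial>lborel)) * (\<integral>\<^sup>+t. ennreal (Q t) \<partial>lborel)"
proof -
  have "(\<integral>\<^sup>+z. \<integral>\<^sup>+u. \<integral>\<^sup>+t. ennreal ((if \<bar>t - z\<bar> \<le> \<bar>h*u\<bar> then K u * \<bar>h*u\<bar> else 0) * Q t) \<partial>lborel \<partial>lborel \<partial>lborel)
     = (\<integral>\<^sup>+u. \<integral>\<^sup>+z. \<integral>\<^sup>+t. ennreal ((if \<bar>t - z\<bar> \<le> \<bar>h*u\<bar> then K u * \<bar>h*u\<bar> else 0) * Q t) \<partial>lborel \<partial>lborel \<partial>lborel)"
    by (rule lborel_pair.Fubini') measurable
  also have "\<dots> = (\<integral>\<^sup>+u. \<integral>\<^sup>+t. \<integral>\<^sup>+z. ennreal ((if \<bar>t - z\<bar> \<le> \<bar>h*u\<bar> then K u * \<bar>h*u\<bar> else 0) * Q t) \<partial>lborel \<partial>lborel \<partial>lborel)"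
    by (intro nn_integral_cong lborel_pair.Fubini') measurable
  also have "\<dots> = (\<integral>\<^sup>+u. \<integral>\<^sup>+t. ennreal (2 * h^2 * (u^2 * K u)) * ennreal (Q t) \<partial>lborel \<partial>lborel)"
  proof (intro nn_integral_cong)
    fix u t :: real
    have "(\<integral>\<^sup>+z. ennreal ((if \<bar>t - z\<bar> \<le> \<bar>h*u\<bar> then K u * \<bar>h*u\<bar> else 0) * Q t) \<partial>lborel)
        = (\<integral>\<^sup>+z. ennreal (K u * \<bar>h*u\<bar> * Q t) * indicator {t - \<bar>h*u\<bar> .. t + \<bar>h*u\<bar>} z \<partial>lborel)"
      by (intro nn_integral_cong) (auto simp: indicator_def abs_le_iff)
    also have "\<dots> = ennreal (K u * \<bar>h*u\<bar> * Q t) * ennreal (2 * \<bar>h*u\<bar>)"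
      by (subst nn_integral_cmult_indicator) auto
    also have "\<dots> = ennreal (2 * h^2 * (u^2 * K u)) * ennreal (Q t)"
    proof -
      have "\<bar>u\<bar> * \<bar>u\<bar> = u * u" by (metis abs_mult_self_eq)
      then have "K u * \<bar>h*u\<bar> * Q t * (2 * \<bar>h*u\<bar>) = 2 * h^2 * (u^2 * K u) * Q t"
        using h by (simp add: abs_mult power2_eq_square mult_ac)
      then show ?thesis
        using K_nonneg[of u] Q_nonneg[of t] h by (simp add: ennreal_mult[symmetric])
    qed
    finally show "(\<integral>\<^sup>+z. ennreal ((if \<bar>t - z\<bar> \<le> \<bar>h*u\<bar> then K u * \<bar>h*u\<bar> else 0) * Q t) \<partial>lborel)
       = ennreal (2 * h^2 * (u^2 * K u)) * ennreal (Q t)" .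
  qed
  also have "\<dots> = (\<integral>\<^sup>+u. ennreal (2 * h^2) * ennreal (u^2 * K u) * (\<integral>\<^sup>+t. ennreal (Q t) \<partial>lborel) \<partial>lborel)"
    using K_nonneg h by (intro nn_integral_cong) (simp add: nn_integral_cmult ennreal_mult)
  also have "\<dots> = ennreal (2 * h^2) * (\<integral>\<^sup>+u. ennreal (u^2 * K u) \<partial>lborel) * (\<integral>\<^sup>+t. ennreal (Q t) \<partial>lborel)"
    by (simp add: nn_integral_cmult nn_integral_multc mult.assoc)
  also have "(\<integral>\<^sup>+u. ennreal (u^2 * K u) \<partial>lborel) = ennreal (\<integral>u. u^2 * K u \<partial>lborel)"
    using K_nonneg by (intro nn_integral_eq_integral u2K) auto
  finally show ?thesis
    using K_nonneg h by (simp add: ennreal_mult integral_nonneg_AE)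
qed

lemma seq_at0: "filterlim (\<lambda>n. inverse (real (Suc n))) (at (0::real)) sequentially"
  unfolding filterlim_at using LIMSEQ_inverse_real_of_nat by auto

lemma deriv_meas:
  fixes g :: "'x \<Rightarrow> real \<Rightarrow> real"
  assumes gm: "(\<lambda>p. g (fst p) (snd p)) \<in> borel_measurable (N \<Otimes>\<^sub>M lborel)"
    and gd: "\<And>x t. g x differentiable (at t)"
  shows "(\<lambda>p. deriv (g (fst p)) (snd p)) \<in> borel_measurable (N \<Otimes>\<^sub>M lborel)"
proof (rule borel_measurable_LIMSEQ_real)
  fix p :: "'x \<times> real"
  have D: "DERIV (g (fst p)) (snd p) :> deriv (g (fst p)) (snd p)"
    using gd DERIV_deriv_iff_real_differentiable by blast
  then have "((\<lambda>h. (g (fst p) (snd p + h) - g (fst p) (snd p)) / h) \<longlongrightarrow> deriv (g (fst p)) (snd p)) (at 0)"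
    unfolding DERIV_def .
  from filterlim_compose[OF this seq_at0]
  show "(\<lambda>i. (g (fst p) (snd p + inverse (real (Suc i))) - g (fst p) (snd p)) / inverse (real (Suc i)))
        \<longlonglongrightarrow> deriv (g (fst p)) (snd p)" .
next
  fix i :: nat
  have sh: "(\<lambda>p. (fst p, snd p + inverse (real (Suc i)))) \<in> measurable (N \<Otimes>\<^sub>M lborel) (N \<Otimes>\<^sub>M lborel)"
    by measurable
  have "(\<lambda>p. g (fst p) (snd p + inverse (real (Suc i)))) \<in> borel_measurable (N \<Otimes>\<^sub>M lborel)"
    using measurable_compose[OF sh gm] by simp
  then show "(\<lambda>p. (g (fst p) (snd p + inverse (real (Suc i))) - g (fst p) (snd p)) / inverse (real (Suc i)))
        \<in> borel_measurable (N \<Otimes>\<^sub>M lborel)"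
    using gm by measurable
qed

lemma lip:
  fixes f :: "real \<Rightarrow> real"
  assumes d: "\<And>y. f differentiable (at y)" and c: "\<And>y. \<bar>deriv f y\<bar> \<le> c"
  shows "\<bar>f x - f y\<bar> \<le> c * \<bar>x - y\<bar>"
proof -
  have D: "\<And>y. DERIV f y :> deriv f y" using d DERIV_deriv_iff_real_differentiable by blast
  have *: "\<bar>f v - f u\<bar> \<le> c * \<bar>v - u\<bar>" if uv: "u < v" for u v
  proof -
    obtain z where "f v - f u = (v - u) * deriv f z"
      using MVT2[OF uv, of f "deriv f"] D by blast
    then have "\<bar>f v - f u\<bar> = \<bar>v - u\<bar> * \<bar>deriv f z\<bar>" by (simp add: abs_mult)
    also have "\<dots> \<le> \<bar>v - u\<bar> * c" by (intro mult_left_mono c) auto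
    finally show ?thesis by (simp add: mult.commute)
  qed
  consider "x < y" | "x = y" | "y < x" by linarith
  then show ?thesis
  proof cases
    case 1 from *[OF 1] show ?thesis by (simp add: abs_minus_commute)
  next
    case 2 then show ?thesis by simp
  next
    case 3 from *[OF 3] show ?thesis by simp
  qed
qed

lemma sup_rat:
  fixes g :: "real \<Rightarrow> real"
  assumes ab: "a < b" and gc: "\<And>z. isCont g z" and g0: "\<And>z. g z \<ge> 0"
  shows "(SUP z\<in>\<rat> \<inter> {a..b}. ennreal (g z)) = ennreal (enn2real (SUP z\<in>\<rat> \<inter> {a..b}. ennreal (g z)))"
    and "\<And>z. z \<in> {a..b} \<Longrightarrow> g z \<le> enn2real (SUP z\<in>\<rat> \<inter> {a..b}. ennreal (g z))"
proof -
  have "continuous_on {a..b} g" by (simp add: continuous_at_imp_continuous_on gc)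
  from continuous_attains_sup[OF compact_Icc _ this] ab
  obtain m where m: "\<And>y. y \<in> {a..b} \<Longrightarrow> g y \<le> g m" by fastforce
  have "(SUP z\<in>\<rat> \<inter> {a..b}. ennreal (g z)) \<le> ennreal (g m)"
    by (rule SUP_least) (use m g0 in \<open>auto intro!: ennreal_leI\<close>)
  then have fin: "(SUP z\<in>\<rat> \<inter> {a..b}. ennreal (g z)) < \<top>"
    using ennreal_less_top le_less_trans by blast
  then show eq: "(SUP z\<in>\<rat> \<inter> {a..b}. ennreal (g z)) = ennreal (enn2real (SUP z\<in>\<rat> \<inter> {a..b}. ennreal (g z)))"
    by simp
  define S where "S = enn2real (SUP z\<in>\<rat> \<inter> {a..b}. ennreal (g z))"
  have S0: "S \<ge> 0" by (simp add: S_def)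
  have rat_le: "g y \<le> S" if "y \<in> \<rat> \<inter> {a..b}" for y
  proof -
    have "ennreal (g y) \<le> (SUP z\<in>\<rat> \<inter> {a..b}. ennreal (g z))"
      using that by (rule SUP_upper)
    then have "ennreal (g y) \<le> ennreal S" using eq by (simp add: S_def)
    then show ?thesis using S0 by simp
  qed
  fix z assume z: "z \<in> {a..b}"
  show "g z \<le> S"
  proof (rule ccontr)
    assume "\<not> g z \<le> S"
    then have pos: "g z - S > 0" by simp
    from gc[of z, unfolded continuous_at_eps_delta, rule_format, OF pos]
    obtain d where d: "d > 0" "\<And>y. dist y z < d \<Longrightarrow> dist (g y) (g z) < g z - S" by blast
    obtain y where y: "y \<in> \<rat> \<inter> {a..b}" "\<bar>y - z\<bar> < d"
    proof (cases "z < b")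
      case True
      obtain r where "r \<in> \<rat>" "z < r" "r < min (z + d) b" using Rats_dense_in_real[of z "min (z+d) b"] True d by auto
      then show ?thesis using that[of r] z by auto
    next
      case False
      then have "z = b" using z by auto
      obtain r where "r \<in> \<rat>" "max (z - d) a < r" "r < z" using Rats_dense_in_real[of "max (z-d) a" z] \<open>z = b\<close> ab d by auto
      then show ?thesis using that[of r] z by auto
    qed
    have "\<bar>g y - g z\<bar> < g z - S" using d(2)[of y] y(2) by (simp add: dist_real_def)
    moreover have "g y \<le> S" using rat_le y(1) .
    ultimately show False by linarith
  qed
qed

lemma grid_bound:
  fixes g :: "real \<Rightarrow> real"
  assumes ab: "a < b" and N: "N > (0::nat)" and c0: "c0 \<ge> 0"
    and lipg: "\<And>x y. \<bar>g x - g y\<bar> \<le> c0 * \<bar>x - y\<bar>"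
    and gr: "\<And>i. i \<le> N \<Longrightarrow> g (a + real i * ((b - a) / real N)) \<le> e1"
    and z: "z \<in> {a..b}"
  shows "g z \<le> e1 + c0 * ((b - a) / real N)"
proof -
  define \<delta> where "\<delta> = (b - a) / real N"
  have dpos: "\<delta> > 0" using ab N by (simp add: \<delta>_def)
  define i where "i = nat \<lfloor>(z - a) / \<delta>\<rfloor>"
  have q0: "(z - a) / \<delta> \<ge> 0" using z dpos by auto
  have qN: "(z - a) / \<delta> \<le> real N" using z dpos ab N by (simp add: \<delta>_def field_simps)
  have i1: "real i \<le> (z - a) / \<delta>" using q0 by (simp add: i_def)
  have i2: "(z - a) / \<delta> < real i + 1" using q0 by (simp add: i_def)
  have iN: "i \<le> N" using i1 qN by linarith
  have zi1: "a + real i * \<delta> \<le> z" using i1 dpos by (simp add: field_simps)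
  have zi2: "z - (a + real i * \<delta>) < \<delta>" using i2 dpos by (simp add: field_simps)
  have "g z \<le> g (a + real i * \<delta>) + c0 * \<bar>z - (a + real i * \<delta>)\<bar>"
    using lipg[of z "a + real i * \<delta>"] by linarith
  also have "\<dots> \<le> e1 + c0 * \<delta>"
    using gr[OF iN] zi1 zi2 c0 unfolding \<delta>_def[symmetric]
    by (intro add_mono mult_left_mono) auto
  finally show ?thesis by (simp add: \<delta>_def)
qed

lemma op_sup:
  fixes M :: "'w measure" and Q :: "nat \<Rightarrow> 'w \<Rightarrow> real \<Rightarrow> real"
  assumes M: "prob_space M" and ab: "a < b"
    and Qm: "\<And>n z. (\<lambda>w. Q n w z) \<in> borel_measurable M"
    and Q0: "\<And>n w z. w \<in> space M \<Longrightarrow> Q n w z \<ge> 0"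
    and Qd: "\<And>n w z. w \<in> space M \<Longrightarrow> Q n w differentiable (at z)"
    and Qp: "\<And>z e. e > 0 \<Longrightarrow> (\<lambda>n. measure M {w \<in> space M. \<bar>Q n w z\<bar> > e}) \<longlonglongrightarrow> 0"
    and Lb: "Op_one M (\<lambda>n w. SUP z. ennreal \<bar>deriv (Q n w) z\<bar>)"
  shows "op_one M (\<lambda>n w. enn2real (SUP z\<in>\<rat> \<inter> {a..b}. ennreal (Q n w z)))"
proof -
  interpret prob_space M by (rule M)
  define S where "S n w = enn2real (SUP z\<in>\<rat> \<inter> {a..b}. ennreal (Q n w z))" for n w
  define L where "L n w = (SUP z. ennreal \<bar>deriv (Q n w) z\<bar>)" for n w
  have cnt: "countable (\<rat> \<inter> {a..b})" by (rule countable_subset[OF _ countable_rat]) auto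
  have Sm[measurable]: "S n \<in> borel_measurable M" for n
    unfolding S_def by (intro borel_measurable_enn2real borel_measurable_SUP cnt) (use Qm in measurable)
  have Lm[measurable]: "L n \<in> borel_measurable M" for n
    using Lb unfolding Op_one_def L_def by auto
  have Qm'[measurable]: "(\<lambda>w. Q n w z) \<in> borel_measurable M" for n z by (rule Qm)
  have Qc: "isCont (Q n w) z" if "w \<in> space M" for n w z
    using Qd[OF that] by (simp add: differentiable_imp_continuous_within)
  have conv: "(\<lambda>n. measure M {w \<in> space M. \<bar>S n w\<bar> > e}) \<longlonglongrightarrow> 0" if e: "e > 0" for e
  proof (rule order_tendstoI)
    fix y :: real assume "y < 0"
    then show "eventually (\<lambda>n. y < measure M {w \<in> space M. \<bar>S n w\<bar> > e}) sequentially"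
      by (intro always_eventually allI less_le_trans[OF _ measure_nonneg])
  next
    fix \<eta> :: real assume eta: "\<eta> > 0"
    from Lb[unfolded Op_one_def] eta obtain c where
      evc: "eventually (\<lambda>n. measure M {w \<in> space M. L n w > ennreal c} < \<eta>/2) sequentially"
      unfolding L_def by (meson half_gt_zero)
    define c0 where "c0 = max c 0"
    have c0: "c0 \<ge> 0" "ennreal c0 = ennreal c" by (auto simp: c0_def ennreal_max_0')
    obtain N :: nat where N: "2 * c0 * (b - a) / e < real N"
      using reals_Archimedean2 by blast
    have Npos: "N > 0"
    proof -
      have "2 * c0 * (b - a) / e \<ge> 0" using c0 ab e by auto
      then show ?thesis using N by (cases N) auto
    qed
    define \<delta> where "\<delta> = (b - a) / real N"
    have cd: "c0 * \<delta> < e / 2"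
      using N Npos e unfolding \<delta>_def by (simp add: field_simps)
    define zi where "zi i = a + real i * \<delta>" for i :: nat
    have "(\<lambda>n. \<Sum>i\<in>{0..N}. measure M {w \<in> space M. \<bar>Q n w (zi i)\<bar> > e/2}) \<longlonglongrightarrow> 0"
      by (intro tendsto_null_sum Qp) (use e in auto)
    then have evs: "eventually (\<lambda>n. (\<Sum>i\<in>{0..N}. measure M {w \<in> space M. \<bar>Q n w (zi i)\<bar> > e/2}) < \<eta>/2) sequentially"
      using eta by (intro order_tendstoD(2)) auto
    have incl: "{w \<in> space M. \<bar>S n w\<bar> > e} \<subseteq> {w \<in> space M. L n w > ennreal c} \<union> (\<Union>i\<in>{0..N}. {w \<in> space M. \<bar>Q n w (zi i)\<bar> > e/2})" for n
    proof
      fix w assume w: "w \<in> {w \<in> space M. \<bar>S n w\<bar> > e}"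
      then have ws: "w \<in> space M" by auto
      show "w \<in> {w \<in> space M. L n w > ennreal c} \<union> (\<Union>i\<in>{0..N}. {w \<in> space M. \<bar>Q n w (zi i)\<bar> > e/2})"
      proof (rule ccontr)
        assume "\<not> ?thesis"
        then have Lle: "L n w \<le> ennreal c0" and gr: "\<And>i. i \<le> N \<Longrightarrow> \<bar>Q n w (zi i)\<bar> \<le> e/2"
          using ws c0 by (auto simp: not_less)
        have dle: "\<bar>deriv (Q n w) y\<bar> \<le> c0" for y
        proof -
          have "ennreal \<bar>deriv (Q n w) y\<bar> \<le> L n w" unfolding L_def by (rule SUP_upper) auto
          then show ?thesis using Lle c0 by (metis ennreal_le_iff order.trans)
        qed
        have lipQ: "\<bar>Q n w x - Q n w y\<bar> \<le> c0 * \<bar>x - y\<bar>" for x y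
          by (rule lip[OF Qd[OF ws] dle])
        have zb: "Q n w z \<le> e/2 + c0 * \<delta>" if "z \<in> {a..b}" for z
          unfolding \<delta>_def
          by (rule grid_bound[OF ab Npos c0(1) lipQ _ that]) (use gr in \<open>fastforce simp: zi_def \<delta>_def\<close>)
        have g0: "Q n w z \<ge> 0" for z using Q0[OF ws] .
        note sr = sup_rat[OF ab Qc[OF ws] g0]
        have "(SUP z\<in>\<rat> \<inter> {a..b}. ennreal (Q n w z)) \<le> ennreal (e/2 + c0 * \<delta>)"
          by (rule SUP_least) (use zb in \<open>auto intro!: ennreal_leI\<close>)
        then have "ennreal (S n w) \<le> ennreal (e/2 + c0 * \<delta>)"
          unfolding S_def using sr(1) by simp
        moreover have "e/2 + c0 * \<delta> \<ge> 0" using e c0 ab Npos by (simp add: \<delta>_def)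
        ultimately have "S n w \<le> e/2 + c0 * \<delta>" by simp
        moreover have "S n w \<ge> 0" by (simp add: S_def)
        ultimately show False using w cd by auto
      qed
    qed
    show "eventually (\<lambda>n. measure M {w \<in> space M. \<bar>S n w\<bar> > e} < \<eta>) sequentially"
      using evc evs
    proof eventually_elim
      case (elim n)
      have "measure M {w \<in> space M. \<bar>S n w\<bar> > e}
          \<le> measure M ({w \<in> space M. L n w > ennreal c} \<union> (\<Union>i\<in>{0..N}. {w \<in> space M. \<bar>Q n w (zi i)\<bar> > e/2}))"
        by (intro finite_measure_mono incl) measurable
      also have "\<dots> \<le> measure M {w \<in> space M. L n w > ennreal c} + measure M (\<Union>i\<in>{0..N}. {w \<in> space M. \<bar>Q n w (zi i)\<bar> > e/2})"
        by (intro measure_Un_le) measurable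
      also have "measure M (\<Union>i\<in>{0..N}. {w \<in> space M. \<bar>Q n w (zi i)\<bar> > e/2}) \<le> (\<Sum>i\<in>{0..N}. measure M {w \<in> space M. \<bar>Q n w (zi i)\<bar> > e/2})"
        by (intro measure_UNION_le) auto
      finally show ?case using elim by linarith
    qed
  qed
  show ?thesis unfolding op_one_def S_def[symmetric] using conv Sm by auto
qed



lemma sq_le: "(a - c)^2 \<le> 2 * (a - b)^2 + 2 * (b - (c::real))^2"
proof -
  have "0 \<le> (a - 2 * b + c)^2" by simp
  then show ?thesis by (simp add: power2_eq_square algebra_simps)
qed

lemma ennr_bd:
  assumes a: "(P::real) \<ge> 0" "Q \<ge> 0" "X \<le> 2 * P + 2 * Q"
  shows "ennreal X \<le> ennreal (2 * P) + 2 * ennreal Q"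
proof -
  have "ennreal X \<le> ennreal (2 * P + 2 * Q)" using a by (intro ennreal_leI)
  also have "\<dots> = ennreal (2 * P) + ennreal (2 * Q)" using a by (intro ennreal_plus) auto
  also have "ennreal (2 * Q) = 2 * ennreal Q" using ennreal_mult[of 2 Q] a by simp
  finally show ?thesis .
qed

lemma op_one_cmult:
  assumes "op_one M S" and c: "c > 0"
  shows "op_one M (\<lambda>n w. c * S n w)"
proof -
  have m: "\<And>n. S n \<in> borel_measurable M" and t: "\<And>e. e > 0 \<Longrightarrow> (\<lambda>n. measure M {w \<in> space M. \<bar>S n w\<bar> > e}) \<longlonglongrightarrow> 0"
    using assms unfolding op_one_def by auto
  show ?thesis unfolding op_one_def
  proof (intro conjI allI impI)
    fix n show "(\<lambda>w. c * S n w) \<in> borel_measurable M" using m[of n] by measurable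
  next
    fix e :: real assume e: "e > 0"
    have "{w \<in> space M. \<bar>c * S n w\<bar> > e} = {w \<in> space M. \<bar>S n w\<bar> > e / c}" for n
      using c by (auto simp: abs_mult field_simps)
    then show "(\<lambda>n. measure M {w \<in> space M. \<bar>c * S n w\<bar> > e}) \<longlonglongrightarrow> 0"
      using t[of "e/c"] e c by simp
  qed
qed

theorem theorem1:
  fixes M :: "'w measure" and PX :: "'x measure"
    and K :: "real \<Rightarrow> real" and f :: "'x \<Rightarrow> real \<Rightarrow> real"
    and ghat :: "nat \<Rightarrow> real \<Rightarrow> 'w \<Rightarrow> real \<Rightarrow> 'x \<Rightarrow> real"
  assumes M: "prob_space M"
    and PX: "prob_space PX"
    \<comment> \<open>f is a conditional density of Y(t) given X = x\<close>
    and f_meas: "(\<lambda>(x, z). f x z) \<in> borel_measurable (PX \<Otimes>\<^sub>M lborel)"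
    and f_nonneg: "\<And>x z. f x z \<ge> 0"
    and f_int: "\<And>x. integrable lborel (f x)"
    and f_one: "\<And>x. (\<integral>z. f x z \<partial>lborel) = 1"
    \<comment> \<open>K is a probability density on the real line\<close>
    and K_meas: "K \<in> borel_measurable lborel"
    and K_nonneg: "\<And>u. K u \<ge> 0"
    and K_int: "integrable lborel K"
    and K_one: "(\<integral>u. K u \<partial>lborel) = 1"
    \<comment> \<open>Q_n(z) is a well-defined (finite) quantity\<close>
    and Q_int: "\<And>n h w z. h > 0 \<Longrightarrow> w \<in> space M \<Longrightarrow>
                 integrable PX (\<lambda>x. (ghat n h w z x - gh K f h z x)^2)"
    \<comment> \<open>(A1)\<close>
    and A1: "\<And>h z. h > 0 \<Longrightarrow> op_one M (\<lambda>n w. Qn PX K f ghat n h w z)"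
    \<comment> \<open>(A2)\<close>
    and A2_diff: "\<And>n h w z. h > 0 \<Longrightarrow> w \<in> space M \<Longrightarrow>
                   (Qn PX K f ghat n h w) differentiable (at z)"
    and A2_bound: "\<And>h. h > 0 \<Longrightarrow>
                   Op_one M (\<lambda>n w. SUP z. ennreal \<bar>deriv (Qn PX K f ghat n h w) z\<bar>)"
    \<comment> \<open>(A3)\<close>
    and A3_first: "integrable lborel (\<lambda>u. u * K u)" "(\<integral>u. u * K u \<partial>lborel) = 0"
    and A3_second: "integrable lborel (\<lambda>u. u^2 * K u)"
    \<comment> \<open>(A4)\<close>
    and A4_diff1: "\<And>x z. (f x) differentiable (at z)"
    and A4_diff2: "\<And>x z. (deriv (f x)) differentiable (at z)"
    and A4_cont: "\<And>x. continuous_on UNIV (deriv (deriv (f x)))"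
    and A4_L2: "(\<integral>\<^sup>+z. (\<integral>\<^sup>+x. ennreal ((deriv (deriv (f x)) z)^2) \<partial>PX) \<partial>lborel) < \<infinity>"
  shows "\<forall>a b::real. a < b \<longrightarrow> (\<exists>C::real. \<forall>h>0. \<exists>R. op_one M R \<and>
           (\<forall>n. \<forall>w \<in> space M.
              (\<integral>\<^sup>+z\<in>{a..b}. (\<integral>\<^sup>+x. ennreal ((ghat n h w z x - f x z)^2) \<partial>PX) \<partial>lborel)
                \<le> ennreal (R n w + C * h^4)))"
proof (intro allI impI)
  fix a b :: real assume ab: "a < b"
  interpret PX: prob_space PX by (rule PX)
  interpret pxl: pair_sigma_finite PX lborel by unfold_locales
  have K_meas'[measurable]: "K \<in> borel_measurable borel" using K_meas by simp
  define q where "q x t = deriv (deriv (f x)) t" for x t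
  have D1: "DERIV (f x) y :> deriv (f x) y" for x y
    using A4_diff1 DERIV_deriv_iff_real_differentiable by blast
  have D2: "DERIV (deriv (f x)) y :> q x y" for x y
    unfolding q_def using A4_diff2 DERIV_deriv_iff_real_differentiable by blast
  have fm: "(\<lambda>p. f (fst p) (snd p)) \<in> borel_measurable (PX \<Otimes>\<^sub>M lborel)"
    using f_meas by (simp add: split_beta')
  have f'm: "(\<lambda>p. deriv (f (fst p)) (snd p)) \<in> borel_measurable (PX \<Otimes>\<^sub>M lborel)"
    by (rule deriv_meas[OF fm A4_diff1])
  have qm[measurable]: "(\<lambda>p. q (fst p) (snd p)) \<in> borel_measurable (PX \<Otimes>\<^sub>M lborel)"
    unfolding q_def by (rule deriv_meas[OF f'm A4_diff2])
  have qm1[measurable]: "q x \<in> borel_measurable borel" for x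
    using A4_cont[of x] unfolding q_def by (rule borel_measurable_continuous_onI)
  define m2 where "m2 = (\<integral>u. u^2 * K u \<partial>lborel)"
  have m2: "m2 \<ge> 0" unfolding m2_def using K_nonneg by (simp add: integral_nonneg_AE)
  define L2 where "L2 = (\<integral>\<^sup>+z. (\<integral>\<^sup>+x. ennreal ((q x z)^2) \<partial>PX) \<partial>lborel)"
  have L2fin: "L2 = ennreal (enn2real L2)"
    using A4_L2 unfolding L2_def q_def by (simp add: less_top)
  define C where "C = 8 * m2^2 * enn2real L2"
  show "\<exists>C::real. \<forall>h>0. \<exists>R. op_one M R \<and>
           (\<forall>n. \<forall>w \<in> space M.
              (\<integral>\<^sup>+z\<in>{a..b}. (\<integral>\<^sup>+x. ennreal ((ghat n h w z x - f x z)^2) \<partial>PX) \<partial>lborel)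
                \<le> ennreal (R n w + C * h^4))"
  proof (intro exI[of _ C] allI impI)
    fix h :: real assume h: "h > 0"
    define Bnd where "Bnd x z = ennreal (2 * h^2 * m2) *
       (\<integral>\<^sup>+u. \<integral>\<^sup>+t. ennreal ((if \<bar>t - z\<bar> \<le> \<bar>h*u\<bar> then K u * \<bar>h*u\<bar> else 0) * (q x t)^2) \<partial>lborel \<partial>lborel)" for x z
    have qm3[measurable]: "(\<lambda>p. q (fst (fst (fst p))) (snd p)) \<in> borel_measurable (((PX \<Otimes>\<^sub>M lborel) \<Otimes>\<^sub>M lborel) \<Otimes>\<^sub>M lborel)"
    proof -
      have "(\<lambda>p. (fst (fst (fst p)), snd p)) \<in> measurable (((PX \<Otimes>\<^sub>M lborel) \<Otimes>\<^sub>M lborel) \<Otimes>\<^sub>M lborel) (PX \<Otimes>\<^sub>M lborel)"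
        by measurable
      from measurable_compose[OF this qm] show ?thesis by simp
    qed
    have Bm[measurable]: "(\<lambda>p. Bnd (fst p) (snd p)) \<in> borel_measurable (PX \<Otimes>\<^sub>M lborel)"
      unfolding Bnd_def by measurable
    have bias: "ennreal ((gh K f h z x - f x z)^2) \<le> Bnd x z" for x z
    proof -
      have qx: "q x = deriv (deriv (f x))" by (rule ext) (simp add: q_def)
      have cq: "continuous_on UNIV (q x)" using A4_cont[of x] qx by simp
      define G1 where "G1 = (\<integral>\<^sup>+u. \<integral>\<^sup>+t. ennreal ((if \<bar>t - z\<bar> \<le> \<bar>h*u\<bar> then K u * \<bar>h*u\<bar> else 0) * \<bar>q x t\<bar>) \<partial>lborel \<partial>lborel)"
      have b1: "ennreal \<bar>gh K f h z x - f x z\<bar> \<le> G1"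
        unfolding gh_def G1_def
        by (rule bias_pt[OF D1[of x] D2[of x] cq K_meas' K_nonneg K_int K_one A3_first(1) A3_first(2) h])
      have "ennreal ((gh K f h z x - f x z)^2) = (ennreal \<bar>gh K f h z x - f x z\<bar>)^2"
        by (simp add: ennreal_power)
      also have "\<dots> \<le> G1^2" by (rule power_mono[OF b1]) simp
      also have "\<dots> \<le> (\<integral>\<^sup>+u. \<integral>\<^sup>+t. ennreal (if \<bar>t - z\<bar> \<le> \<bar>h*u\<bar> then K u * \<bar>h*u\<bar> else 0) \<partial>lborel \<partial>lborel) *
         (\<integral>\<^sup>+u. \<integral>\<^sup>+t. ennreal ((if \<bar>t - z\<bar> \<le> \<bar>h*u\<bar> then K u * \<bar>h*u\<bar> else 0) * (q x t)^2) \<partial>lborel \<partial>lborel)"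
        unfolding G1_def by (rule cs_step[OF K_meas' K_nonneg qm1])
      also have "\<dots> = Bnd x z"
        unfolding Bnd_def weight_total[OF K_meas' K_nonneg A3_second h] m2_def ..
      finally show ?thesis .
    qed
    have total: "(\<integral>\<^sup>+z. \<integral>\<^sup>+x. Bnd x z \<partial>PX \<partial>lborel) = ennreal (2 * h^2 * m2)^2 * L2"
    proof -
      have cBm: "case_prod Bnd \<in> borel_measurable (PX \<Otimes>\<^sub>M lborel)"
        using Bm by (simp add: split_beta')
      have "(\<integral>\<^sup>+z. \<integral>\<^sup>+x. Bnd x z \<partial>PX \<partial>lborel) = (\<integral>\<^sup>+x. \<integral>\<^sup>+z. Bnd x z \<partial>lborel \<partial>PX)"
        by (rule pxl.Fubini'[OF cBm])
      also have "\<dots> = (\<integral>\<^sup>+x. ennreal (2 * h^2 * m2) * (ennreal (2 * h^2 * m2) * (\<integral>\<^sup>+t. ennreal ((q x t)^2) \<partial>lborel)) \<partial>PX)"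
      proof (intro nn_integral_cong)
        fix x
        have qm2: "(\<lambda>t. (q x t)^2) \<in> borel_measurable borel" by measurable
        show "(\<integral>\<^sup>+z. Bnd x z \<partial>lborel) = ennreal (2 * h^2 * m2) * (ennreal (2 * h^2 * m2) * (\<integral>\<^sup>+t. ennreal ((q x t)^2) \<partial>lborel))"
          unfolding Bnd_def
          by (subst nn_integral_cmult) (measurable, simp add: int_z[OF K_meas' K_nonneg A3_second h qm2] m2_def)
      qed
      also have "\<dots> = ennreal (2 * h^2 * m2)^2 * (\<integral>\<^sup>+x. \<integral>\<^sup>+t. ennreal ((q x t)^2) \<partial>lborel \<partial>PX)"
        by (subst nn_integral_cmult[symmetric], measurable)+ (simp add: power2_eq_square mult.assoc)
      also have "(\<integral>\<^sup>+x. \<integral>\<^sup>+t. ennreal ((q x t)^2) \<partial>lborel \<partial>PX) = L2"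
        unfolding L2_def by (rule pxl.Fubini'[symmetric]) measurable
      finally show ?thesis .
    qed
    show "\<exists>R. op_one M R \<and>
           (\<forall>n. \<forall>w \<in> space M.
              (\<integral>\<^sup>+z\<in>{a..b}. (\<integral>\<^sup>+x. ennreal ((ghat n h w z x - f x z)^2) \<partial>PX) \<partial>lborel)
                \<le> ennreal (R n w + C * h^4))"
    proof -
      define Qf where "Qf n w z = Qn PX K f ghat n h w z" for n w z
      have A1': "op_one M (\<lambda>n w. Qf n w z)" for z unfolding Qf_def by (rule A1[OF h])
      have Qm: "(\<lambda>w. Qf n w z) \<in> borel_measurable M" for n z using A1'[of z] unfolding op_one_def by auto
      have Qp: "(\<lambda>n. measure M {w \<in> space M. \<bar>Qf n w z\<bar> > e}) \<longlonglongrightarrow> 0" if "e > 0" for z e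
        using A1'[of z] that unfolding op_one_def by auto
      have Q0: "Qf n w z \<ge> 0" for n w z unfolding Qf_def Qn_def by (simp add: integral_nonneg_AE)
      have Qeq: "Qf n w = Qn PX K f ghat n h w" for n w by (rule ext) (simp add: Qf_def)
      have Qd: "Qf n w differentiable (at z)" if "w \<in> space M" for n w z
        unfolding Qeq by (rule A2_diff[OF h that])
      have Lb: "Op_one M (\<lambda>n w. SUP z. ennreal \<bar>deriv (Qf n w) z\<bar>)"
        unfolding Qeq by (rule A2_bound[OF h])
      define S where "S n w = enn2real (SUP z\<in>\<rat> \<inter> {a..b}. ennreal (Qf n w z))" for n w
      have opS: "op_one M S"
        unfolding S_def[abs_def] by (rule op_sup[OF M ab Qm Q0 Qd Qp Lb])
      define R where "R n w = 2 * (b - a) * S n w" for n w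
      have opR: "op_one M R" unfolding R_def[abs_def] by (rule op_one_cmult[OF opS]) (use ab in auto)
      show ?thesis
      proof (intro exI[of _ R] conjI opR allI ballI)
        fix n w assume w: "w \<in> space M"
        have Bmx[measurable]: "(\<lambda>x. Bnd x z) \<in> borel_measurable PX" for z
        proof -
          have "(\<lambda>x. (x, z)) \<in> measurable PX (PX \<Otimes>\<^sub>M lborel)" by measurable
          from measurable_compose[OF this Bm] show ?thesis by simp
        qed
        have Bz[measurable]: "(\<lambda>z. \<integral>\<^sup>+x. Bnd x z \<partial>PX) \<in> borel_measurable lborel"
        proof -
          have "(\<lambda>p. (snd p, fst p)) \<in> measurable (lborel \<Otimes>\<^sub>M PX) (PX \<Otimes>\<^sub>M lborel)" by measurable
          from measurable_compose[OF this Bm]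
          have "case_prod (\<lambda>z x. Bnd x z) \<in> borel_measurable (lborel \<Otimes>\<^sub>M PX)" by (simp add: split_beta')
          then show ?thesis by (rule PX.borel_measurable_nn_integral)
        qed
        have Qc: "isCont (Qf n w) z" for z
          using Qd[OF w] by (simp add: differentiable_imp_continuous_within)
        have Qfm[measurable]: "Qf n w \<in> borel_measurable borel"
          by (intro borel_measurable_continuous_onI continuous_at_imp_continuous_on) (use Qc in auto)
        have pt: "(\<integral>\<^sup>+x. ennreal ((ghat n h w z x - f x z)^2) \<partial>PX) \<le> ennreal (2 * Qf n w z) + 2 * (\<integral>\<^sup>+x. Bnd x z \<partial>PX)" for z
        proof -
          have int: "integrable PX (\<lambda>x. (ghat n h w z x - gh K f h z x)^2)" by (rule Q_int[OF h w])
          have im[measurable]: "(\<lambda>x. (ghat n h w z x - gh K f h z x)^2) \<in> borel_measurable PX"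
            using int by (rule borel_measurable_integrable)
          have "(\<integral>\<^sup>+x. ennreal ((ghat n h w z x - f x z)^2) \<partial>PX) \<le> (\<integral>\<^sup>+x. ennreal (2 * (ghat n h w z x - gh K f h z x)^2) + 2 * Bnd x z \<partial>PX)"
          proof (intro nn_integral_mono)
            fix x
            have "(ghat n h w z x - f x z)^2 \<le> 2 * (ghat n h w z x - gh K f h z x)^2 + 2 * (gh K f h z x - f x z)^2"
              by (rule sq_le)
            then have "ennreal ((ghat n h w z x - f x z)^2) \<le> ennreal (2 * (ghat n h w z x - gh K f h z x)^2) + 2 * ennreal ((gh K f h z x - f x z)^2)"
              by (intro ennr_bd) auto
            also have "\<dots> \<le> ennreal (2 * (ghat n h w z x - gh K f h z x)^2) + 2 * Bnd x z"
              using mult_left_mono[OF bias[of z x], of 2] by (intro add_left_mono) simp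
            finally show "ennreal ((ghat n h w z x - f x z)^2) \<le> ennreal (2 * (ghat n h w z x - gh K f h z x)^2) + 2 * Bnd x z" .
          qed
          also have "\<dots> = (\<integral>\<^sup>+x. ennreal (2 * (ghat n h w z x - gh K f h z x)^2) \<partial>PX) + 2 * (\<integral>\<^sup>+x. Bnd x z \<partial>PX)"
            by (subst nn_integral_add) (measurable, simp add: nn_integral_cmult)
          also have "(\<integral>\<^sup>+x. ennreal (2 * (ghat n h w z x - gh K f h z x)^2) \<partial>PX) = ennreal (2 * Qf n w z)"
            unfolding Qf_def Qn_def using int
            by (subst nn_integral_eq_integral) auto
          finally show ?thesis .
        qed
        have S_ub: "Qf n w z \<le> S n w" if "z \<in> {a..b}" for z
          unfolding S_def by (rule sup_rat(2)[OF ab Qc Q0 that])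
        have "(\<integral>\<^sup>+z\<in>{a..b}. (\<integral>\<^sup>+x. ennreal ((ghat n h w z x - f x z)^2) \<partial>PX) \<partial>lborel)
            \<le> (\<integral>\<^sup>+z. ennreal (2 * Qf n w z) * indicator {a..b} z + (2 * (\<integral>\<^sup>+x. Bnd x z \<partial>PX)) * indicator {a..b} z \<partial>lborel)"
          by (intro nn_integral_mono) (auto simp: distrib_right[symmetric] intro!: mult_right_mono pt)
        also have "\<dots> = (\<integral>\<^sup>+z. ennreal (2 * Qf n w z) * indicator {a..b} z \<partial>lborel) + (\<integral>\<^sup>+z. (2 * (\<integral>\<^sup>+x. Bnd x z \<partial>PX)) * indicator {a..b} z \<partial>lborel)"
          by (rule nn_integral_add) measurable
        also have "\<dots> \<le> (\<integral>\<^sup>+z. ennreal (2 * S n w) * indicator {a..b} z \<partial>lborel) + (\<integral>\<^sup>+z. 2 * (\<integral>\<^sup>+x. Bnd x z \<partial>PX) \<partial>lborel)"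
          by (intro add_mono nn_integral_mono) (auto simp: indicator_def intro!: ennreal_leI S_ub)
        also have "(\<integral>\<^sup>+z. ennreal (2 * S n w) * indicator {a..b} z \<partial>lborel) = ennreal (R n w)"
        proof -
          have S0: "S n w \<ge> 0" by (simp add: S_def)
          have "(\<integral>\<^sup>+z. ennreal (2 * S n w) * indicator {a..b} z \<partial>lborel) = ennreal (2 * S n w) * ennreal (b - a)"
            using ab by (subst nn_integral_cmult_indicator) auto
          also have "\<dots> = ennreal (R n w)"
            using ab S0 by (simp add: R_def ennreal_mult[symmetric] mult_ac)
          finally show ?thesis .
        qed
        also have "(\<integral>\<^sup>+z. 2 * (\<integral>\<^sup>+x. Bnd x z \<partial>PX) \<partial>lborel) = ennreal (C * h^4)"
        proof -
          have "(\<integral>\<^sup>+z. 2 * (\<integral>\<^sup>+x. Bnd x z \<partial>PX) \<partial>lborel) = 2 * (ennreal (2 * h^2 * m2)^2 * L2)"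
            by (subst nn_integral_cmult) (measurable, simp add: total)
          also have "\<dots> = ennreal (C * h^4)"
          proof -
            define Lr where "Lr = enn2real L2"
            have Lr0: "Lr \<ge> 0" by (simp add: Lr_def)
            have x0: "2 * h^2 * m2 \<ge> 0" using m2 by simp
            have "2 * (ennreal (2 * h^2 * m2)^2 * L2) = 2 * (ennreal ((2 * h^2 * m2)^2) * ennreal Lr)"
              using L2fin ennreal_power[OF x0, of 2] by (simp add: Lr_def)
            also have "\<dots> = ennreal (2 * ((2 * h^2 * m2)^2 * Lr))"
              using Lr0 ennreal_mult[of 2 "(2 * h^2 * m2)^2 * Lr"] by (simp add: ennreal_mult[symmetric])
            also have "2 * ((2 * h^2 * m2)^2 * Lr) = C * h^4"
              unfolding C_def Lr_def[symmetric] by (simp add: power_mult_distrib power2_eq_square power4_eq_xxxx)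
            finally show ?thesis .
          qed
          finally show ?thesis .
        qed
        also have "ennreal (R n w) + ennreal (C * h^4) = ennreal (R n w + C * h^4)"
          using ab m2 by (intro ennreal_plus[symmetric]) (auto simp: R_def S_def C_def)
        finally show "(\<integral>\<^sup>+z\<in>{a..b}. (\<integral>\<^sup>+x. ennreal ((ghat n h w z x - f x z)^2) \<partial>PX) \<partial>lborel)
                \<le> ennreal (R n w + C * h^4)" .
      qed
    qed
  qed
qed

end
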